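(* Let $p$ be a prime, $\zeta=\zeta_p$ a primitive $p$th root of unity, $t=1-\zeta$, and let $C_p$ be cyclic with generator $c$. The cyclic Wedderburn embedding $\omega_p\colon\mathbb{Z}[\zeta]C_p\to\prod_{j\in\mathbb{Z}/p}\mathbb{Z}[\zeta]$, $c\mapsto(\zeta^j)_{j}$, maps $\mathbb{Z}[\zeta]C_p$ isomorphically onto \[ W^{(1)}_p=\Bigl\{(y_j)_{j\in[0,p-1]}\in\prod_{j\in[0,p-1]}\mathbb{Z}[\zeta]\;\Bigm|\;\sum_{j\in[0,i]}(-1)^j\binom{i}{j}y_j\equiv0\pmod{t^i\mathbb{Z}[\zeta]}\ \text{for all }i\in[0,p-1]\Bigr\}. \]
   Context: The product $\prod_{j\in\mathbb{Z}/p}$ is identified with $\prod_{j\in[0,p-1]}$ in the obvious way. *)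

theory Defs
  imports Complex_Main "HOL-Computational_Algebra.Polynomial"
begin

definition Zring :: "complex \<Rightarrow> complex set" where
  "Zring \<zeta> = {poly (map_poly of_int f) \<zeta> | f :: int poly. True}"

definition cong0_ideal :: "complex \<Rightarrow> complex \<Rightarrow> complex \<Rightarrow> bool" where
  "cong0_ideal \<zeta> a y \<longleftrightarrow> (\<exists>z\<in>Zring \<zeta>. y = a * z)"

text \<open>The group ring Z[zeta]C_p: an element sum_{k<p} x_k c^k is represented by the
  coefficient function x (extended by 0 outside [0,p-1]).\<close>
definition grpring :: "nat \<Rightarrow> complex \<Rightarrow> (nat \<Rightarrow> complex) set" where
  "grpring p \<zeta> = {x. (\<forall>k<p. x k \<in> Zring \<zeta>) \<and> (\<forall>k\<ge>p. x k = 0)}"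

definition grp_add :: "(nat \<Rightarrow> complex) \<Rightarrow> (nat \<Rightarrow> complex) \<Rightarrow> nat \<Rightarrow> complex" where
  "grp_add x y = (\<lambda>k. x k + y k)"

text \<open>Multiplication in the group ring: c^k c^l = c^((k+l) mod p).\<close>
definition grp_mult :: "nat \<Rightarrow> (nat \<Rightarrow> complex) \<Rightarrow> (nat \<Rightarrow> complex) \<Rightarrow> nat \<Rightarrow> complex" where
  "grp_mult p x y = (\<lambda>m. if m < p then
      (\<Sum>k<p. \<Sum>l<p. if (k + l) mod p = m then x k * y l else 0) else 0)"

definition grp_one :: "nat \<Rightarrow> complex" where
  "grp_one = (\<lambda>k. if k = 0 then 1 else 0)"

definition prodring :: "nat \<Rightarrow> complex \<Rightarrow> (nat \<Rightarrow> complex) set" where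
  "prodring p \<zeta> = {y. (\<forall>j<p. y j \<in> Zring \<zeta>) \<and> (\<forall>j\<ge>p. y j = 0)}"

definition prod_one :: "nat \<Rightarrow> nat \<Rightarrow> complex" where
  "prod_one p = (\<lambda>j. if j < p then 1 else 0)"

definition omega :: "nat \<Rightarrow> complex \<Rightarrow> (nat \<Rightarrow> complex) \<Rightarrow> nat \<Rightarrow> complex" where
  "omega p \<zeta> x = (\<lambda>j. if j < p then (\<Sum>k<p. x k * \<zeta> ^ (j * k)) else 0)"

definition W1 :: "nat \<Rightarrow> complex \<Rightarrow> (nat \<Rightarrow> complex) set" where
  "W1 p \<zeta> = {y \<in> prodring p \<zeta>. \<forall>i<p.
      cong0_ideal \<zeta> ((1 - \<zeta>) ^ i) (\<Sum>j\<le>i. (-1) ^ j * of_nat (i choose j) * y j)}"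

end

theory Submission
  imports Defs "HOL-Number_Theory.Cong"
begin

section \<open>The ring Z[zeta]\<close>

lemma mp_add: "map_poly (of_int::int\<Rightarrow>complex) (f+g) = map_poly of_int f + map_poly of_int g"
  by (rule poly_eqI) (simp add: coeff_map_poly)
lemma mp_mult: "map_poly (of_int::int\<Rightarrow>complex) (f*g) = map_poly of_int f * map_poly of_int g"
  by (rule poly_eqI) (simp add: coeff_map_poly coeff_mult)
lemma mp_uminus: "map_poly (of_int::int\<Rightarrow>complex) (-f) = - map_poly of_int f"
  by (rule poly_eqI) (simp add: coeff_map_poly)

lemma Z_add: "a \<in> Zring z \<Longrightarrow> b \<in> Zring z \<Longrightarrow> a + b \<in> Zring z"
  unfolding Zring_def
proof clarify
  fix f g :: "int poly"
  show "\<exists>h. poly (map_poly of_int f) z + poly (map_poly of_int g) z = poly (map_poly of_int h) z \<and> True"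
    by (rule exI[of _ "f+g"]) (simp add: mp_add)
qed

lemma Z_mult: "a \<in> Zring z \<Longrightarrow> b \<in> Zring z \<Longrightarrow> a * b \<in> Zring z"
  unfolding Zring_def
proof clarify
  fix f g :: "int poly"
  show "\<exists>h. poly (map_poly of_int f) z * poly (map_poly of_int g) z = poly (map_poly of_int h) z \<and> True"
    by (rule exI[of _ "f*g"]) (simp add: mp_mult)
qed

lemma Z_uminus: "a \<in> Zring z \<Longrightarrow> - a \<in> Zring z"
  unfolding Zring_def
proof clarify
  fix f :: "int poly"
  show "\<exists>h. - poly (map_poly of_int f) z = poly (map_poly of_int h) z \<and> True"
    by (rule exI[of _ "-f"]) (simp add: mp_uminus)
qed

lemma Z_diff: "a \<in> Zring z \<Longrightarrow> b \<in> Zring z \<Longrightarrow> a - b \<in> Zring z"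
  using Z_add[of a z "-b"] Z_uminus[of b z] by simp

lemma Z_of_int: "of_int k \<in> Zring z"
  unfolding Zring_def by (rule CollectI, rule exI[of _ "[:k:]"]) (simp add: map_poly_pCons)

lemma Z_zero: "0 \<in> Zring z" using Z_of_int[of 0 z] by simp
lemma Z_one: "1 \<in> Zring z" using Z_of_int[of 1 z] by simp
lemma Z_nat: "of_nat n \<in> Zring z" using Z_of_int[of "int n" z] by simp

lemma Z_zeta: "z \<in> Zring z"
  unfolding Zring_def by (rule CollectI, rule exI[of _ "[:0,1:]"]) (simp add: map_poly_pCons)

lemma Z_power: "a \<in> Zring z \<Longrightarrow> a ^ n \<in> Zring z"
  by (induction n) (auto intro: Z_one Z_mult)

lemma Z_sum: "finite A \<Longrightarrow> (\<And>i. i \<in> A \<Longrightarrow> f i \<in> Zring z) \<Longrightarrow> sum f A \<in> Zring z"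
  by (induction A rule: finite_induct) (auto intro: Z_zero Z_add)

lemma Z_prod: "finite A \<Longrightarrow> (\<And>i. i \<in> A \<Longrightarrow> f i \<in> Zring z) \<Longrightarrow> prod f A \<in> Zring z"
  by (induction A rule: finite_induct) (auto intro: Z_one Z_mult)

lemma Z_zpow: "z ^ n \<in> Zring z"
  by (intro Z_power Z_zeta)

lemma Z_m1pow: "(-1) ^ n \<in> Zring z"
  by (intro Z_power Z_uminus Z_one)

lemma cong0_diff: "cong0_ideal z a u \<Longrightarrow> cong0_ideal z a v \<Longrightarrow> cong0_ideal z a (u - v)"
  unfolding cong0_ideal_def
proof clarify
  fix z1 z2 assume "z1 \<in> Zring z" "z2 \<in> Zring z"
  then show "\<exists>w\<in>Zring z. a * z1 - a * z2 = a * w"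
    by (intro bexI[of _ "z1 - z2"]) (auto simp: right_diff_distrib intro: Z_diff)
qed

lemma if_mult0: "(if c then a else 0) * (b::complex) = (if c then a * b else 0)"
  by simp

section \<open>Group ring closure and omega algebra (no assumptions)\<close>

lemma grp_add_in: "x \<in> grpring p z \<Longrightarrow> y \<in> grpring p z \<Longrightarrow> grp_add x y \<in> grpring p z"
  by (auto simp: grpring_def grp_add_def intro: Z_add)

lemma grp_scal_in: "a \<in> Zring z \<Longrightarrow> x \<in> grpring p z \<Longrightarrow> (\<lambda>k. a * x k) \<in> grpring p z"
  by (auto simp: grpring_def intro: Z_mult)

lemma grp_mult_in: "x \<in> grpring p z \<Longrightarrow> y \<in> grpring p z \<Longrightarrow> grp_mult p x y \<in> grpring p z"
  unfolding grpring_def grp_mult_def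
  by (auto intro!: Z_sum Z_mult Z_zero)

lemma grp_one_in: "0 < p \<Longrightarrow> grp_one \<in> grpring p z"
  by (auto simp: grpring_def grp_one_def intro: Z_one Z_zero)

lemma omega_add: "omega p z (grp_add x y) = (\<lambda>j. omega p z x j + omega p z y j)"
  by (auto simp: omega_def grp_add_def sum.distrib distrib_right fun_eq_iff)

lemma omega_scal: "omega p z (\<lambda>k. a * x k) = (\<lambda>j. a * omega p z x j)"
  by (auto simp: omega_def sum_distrib_left mult.assoc fun_eq_iff)

lemma omega_in: "x \<in> grpring p z \<Longrightarrow> omega p z x \<in> prodring p z"
  unfolding prodring_def grpring_def omega_def
  by (auto intro!: Z_sum Z_mult Z_zpow)

lemma omega_one: "0 < p \<Longrightarrow> omega p z grp_one = prod_one p"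
proof -
  assume p: "0 < p"
  have "(\<Sum>k<p. (if k = 0 then 1 else 0) * z ^ (j * k)) = 1" for j
  proof -
    have "(\<Sum>k<p. (if k = 0 then 1 else 0) * z ^ (j * k)) = (\<Sum>k<p. if k = 0 then 1 else 0)"
      by (rule sum.cong) auto
    also have "\<dots> = 1" using p by (simp add: sum.delta)
    finally show ?thesis .
  qed
  then show ?thesis by (auto simp: omega_def prod_one_def grp_one_def fun_eq_iff)
qed

context
  fixes p :: nat and \<zeta> :: complex
  assumes pr: "prime p" and zp: "\<zeta> ^ p = 1" and prim: "\<forall>k\<in>{1..<p}. \<zeta> ^ k \<noteq> 1"
begin

lemma p2: "p \<ge> 2" using pr prime_ge_2_nat by blast

lemma z_ne1: "\<zeta> \<noteq> 1" using prim p2 by force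

lemma z_mod: "\<zeta> ^ (n mod p) = \<zeta> ^ n"
proof -
  have "\<zeta> ^ (p * (n div p) + n mod p) = (\<zeta> ^ p) ^ (n div p) * \<zeta> ^ (n mod p)"
    by (simp only: power_add power_mult)
  moreover have "p * (n div p) + n mod p = n" by simp
  ultimately show ?thesis using zp by simp
qed

lemma z_mod2: "\<zeta> ^ (j * (n mod p)) = \<zeta> ^ (j * n)"
  by (metis mult.commute power_mult z_mod)

lemma z_pow_ne1: "n mod p \<noteq> 0 \<Longrightarrow> \<zeta> ^ n \<noteq> 1"
proof -
  assume "n mod p \<noteq> 0"
  then have "n mod p \<in> {1..<p}" using p2 by auto
  then show ?thesis using prim z_mod by metis
qed

lemma geom: "(\<Sum>j<p. (\<zeta> ^ n) ^ j) = (if n mod p = 0 then of_nat p else 0)"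
proof (cases "n mod p = 0")
  case True
  then have "\<zeta> ^ n = 1" using z_mod[of n] by simp
  then show ?thesis using True by simp
next
  case False
  have "1 - (\<zeta> ^ n) ^ p = (1 - \<zeta> ^ n) * (\<Sum>j<p. (\<zeta> ^ n) ^ j)"
    by (rule one_diff_power_eq)
  moreover have "(\<zeta> ^ n) ^ p = 1" by (metis power_mult power_mult_distrib mult.commute zp power_one)
  ultimately have "(1 - \<zeta> ^ n) * (\<Sum>j<p. (\<zeta> ^ n) ^ j) = 0" by simp
  then show ?thesis using False z_pow_ne1[OF False] by simp
qed

lemma omega_mult: "omega p \<zeta> (grp_mult p x y) = (\<lambda>j. omega p \<zeta> x j * omega p \<zeta> y j)"
proof (rule ext)
  fix j
  show "omega p \<zeta> (grp_mult p x y) j = omega p \<zeta> x j * omega p \<zeta> y j"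
  proof (cases "j < p")
    case False then show ?thesis by (simp add: omega_def)
  next
    case True
    have "omega p \<zeta> (grp_mult p x y) j =
      (\<Sum>m<p. (\<Sum>k<p. \<Sum>l<p. if (k + l) mod p = m then x k * y l else 0) * \<zeta> ^ (j * m))"
      using True by (simp add: omega_def grp_mult_def)
    also have "\<dots> = (\<Sum>m<p. \<Sum>k<p. \<Sum>l<p. if (k + l) mod p = m then x k * y l * \<zeta> ^ (j * m) else 0)"
      by (simp add: sum_distrib_right if_mult0)
    also have "\<dots> = (\<Sum>k<p. \<Sum>l<p. \<Sum>m<p. if (k + l) mod p = m then x k * y l * \<zeta> ^ (j * m) else 0)"
      by (subst sum.swap, subst (2) sum.swap, rule refl)
    also have "\<dots> = (\<Sum>k<p. \<Sum>l<p. x k * y l * \<zeta> ^ (j * ((k + l) mod p)))"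
      using p2 by (simp add: sum.delta)
    also have "\<dots> = (\<Sum>k<p. \<Sum>l<p. (x k * \<zeta> ^ (j * k)) * (y l * \<zeta> ^ (j * l)))"
      by (simp add: z_mod2 distrib_left power_add mult_ac)
    also have "\<dots> = omega p \<zeta> x j * omega p \<zeta> y j"
      using True by (simp add: omega_def sum_product)
    finally show ?thesis .
  qed
qed

lemma vand:
  assumes h: "\<forall>j<p. (\<Sum>k<p. d k * \<zeta> ^ (j * k)) = 0" and k0: "k0 < p"
  shows "d k0 = 0"
proof -
  have "0 = (\<Sum>j<p. \<zeta> ^ (j * (p - k0)) * (\<Sum>k<p. d k * \<zeta> ^ (j * k)))"
    using h by simp
  also have "\<dots> = (\<Sum>j<p. \<Sum>k<p. d k * (\<zeta> ^ (k + (p - k0))) ^ j)"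
    by (simp add: sum_distrib_left algebra_simps flip: power_add power_mult)
  also have "\<dots> = (\<Sum>k<p. d k * (\<Sum>j<p. (\<zeta> ^ (k + (p - k0))) ^ j))"
    by (subst sum.swap) (simp add: sum_distrib_left)
  also have "\<dots> = (\<Sum>k<p. if k = k0 then d k * of_nat p else 0)"
  proof (rule sum.cong[OF refl])
    fix k assume k: "k \<in> {..<p}"
    have "(k + (p - k0)) mod p = 0 \<longleftrightarrow> k = k0"
    proof (cases "k < k0")
      case True
      then have "(k + (p - k0)) mod p = k + (p - k0)" using k0 by simp
      then show ?thesis using True k0 by simp
    next
      case False
      then have "k + (p - k0) = (k - k0) + p" using k0 by simp
      then have "(k + (p - k0)) mod p = (k - k0 + p) mod p" by (simp only:)
      also have "\<dots> = (k - k0) mod p" by (rule mod_add_self2)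
      also have "\<dots> = k - k0" using k by simp
      finally have "(k + (p - k0)) mod p = k - k0" .
      then show ?thesis using False by simp
    qed
    then show "d k * (\<Sum>j<p. (\<zeta> ^ (k + (p - k0))) ^ j) = (if k = k0 then d k * of_nat p else 0)"
      by (simp add: geom)
  qed
  also have "\<dots> = d k0 * of_nat p" using k0 by (simp add: sum.delta)
  finally show ?thesis using p2 by simp
qed

lemma omega_inj: "inj_on (omega p \<zeta>) (grpring p \<zeta>)"
proof (rule inj_onI)
  fix x y assume x: "x \<in> grpring p \<zeta>" and y: "y \<in> grpring p \<zeta>" and e: "omega p \<zeta> x = omega p \<zeta> y"
  have "\<forall>j<p. (\<Sum>k<p. (x k - y k) * \<zeta> ^ (j * k)) = 0"
  proof (intro allI impI)
    fix j assume j: "j < p"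
    have "omega p \<zeta> x j = omega p \<zeta> y j" using e by simp
    then show "(\<Sum>k<p. (x k - y k) * \<zeta> ^ (j * k)) = 0"
      using j by (simp add: omega_def left_diff_distrib sum_subtractf)
  qed
  then have "\<And>k. k < p \<Longrightarrow> x k - y k = 0" using vand[of "\<lambda>k. x k - y k"] by blast
  then show "x = y" using x y by (auto simp: grpring_def fun_eq_iff) (metis not_le eq_iff_diff_eq_0)
qed

lemma omega_W1: "x \<in> grpring p \<zeta> \<Longrightarrow> omega p \<zeta> x \<in> W1 p \<zeta>"
proof -
  assume x: "x \<in> grpring p \<zeta>"
  define S where "S k = sum ((^) \<zeta>) {..<k}" for k
  have "cong0_ideal \<zeta> ((1 - \<zeta>) ^ i) (\<Sum>j\<le>i. (-1) ^ j * of_nat (i choose j) * omega p \<zeta> x j)"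
    if i: "i < p" for i
  proof -
    have "(\<Sum>j\<le>i. (-1) ^ j * of_nat (i choose j) * omega p \<zeta> x j)
        = (\<Sum>j\<le>i. (-1) ^ j * of_nat (i choose j) * (\<Sum>k<p. x k * \<zeta> ^ (j * k)))"
      using i by (intro sum.cong) (auto simp: omega_def)
    also have "\<dots> = (\<Sum>j\<le>i. \<Sum>k<p. x k * (of_nat (i choose j) * (- (\<zeta> ^ k)) ^ j * 1 ^ (i - j)))"
    proof (rule sum.cong[OF refl])
      fix j
      have t: "(-1) ^ j * of_nat (i choose j) * (x k * \<zeta> ^ (j * k)) =
            x k * (of_nat (i choose j) * (- (\<zeta> ^ k)) ^ j * 1 ^ (i - j))" for k
        by (simp add: power_minus[of "\<zeta> ^ k" j] mult.commute mult.left_commute flip: power_mult)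
      show "(-1) ^ j * of_nat (i choose j) * (\<Sum>k<p. x k * \<zeta> ^ (j * k)) =
            (\<Sum>k<p. x k * (of_nat (i choose j) * (- (\<zeta> ^ k)) ^ j * 1 ^ (i - j)))"
        by (subst sum_distrib_left, rule sum.cong[OF refl], rule t)
    qed
    also have "\<dots> = (\<Sum>k<p. x k * (\<Sum>j\<le>i. of_nat (i choose j) * (- (\<zeta> ^ k)) ^ j * 1 ^ (i - j)))"
      by (subst sum.swap) (simp add: sum_distrib_left)
    also have "\<dots> = (\<Sum>k<p. x k * (- (\<zeta> ^ k) + 1) ^ i)"
      by (simp only: binomial_ring)
    also have "\<dots> = (\<Sum>k<p. x k * (1 - \<zeta> ^ k) ^ i)"
      by simp
    also have "\<dots> = (1 - \<zeta>) ^ i * (\<Sum>k<p. x k * S k ^ i)"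
    proof -
      have t: "x k * (1 - \<zeta> ^ k) ^ i = (1 - \<zeta>) ^ i * (x k * S k ^ i)" for k
        by (simp only: S_def one_diff_power_eq power_mult_distrib mult_ac)
      show ?thesis by (subst sum_distrib_left, rule sum.cong[OF refl], rule t)
    qed
    finally show ?thesis
      unfolding cong0_ideal_def using x
      by (intro bexI[of _ "\<Sum>k<p. x k * S k ^ i"])
         (auto simp: S_def grpring_def intro!: Z_sum Z_mult Z_power Z_zpow)
  qed
  then show ?thesis using omega_in[OF x] by (simp add: W1_def)
qed

lemma S_unit:
  assumes a: "1 \<le> a" "a < p"
  shows "\<exists>v\<in>Zring \<zeta>. sum ((^) \<zeta>) {..<a} * v = 1"
proof -
  have "coprime a p" using pr a
    by (metis coprime_commute le_less_trans less_not_refl2 nat_dvd_not_less not_one_le_zero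
        prime_imp_coprime_nat zero_less_iff_neq_zero linorder_not_le)
  then obtain b where b: "[a * b = Suc 0] (mod p)" using cong_solve_coprime_nat by blast
  define R where "R = (\<Sum>l<b. (\<zeta> ^ a) ^ l)"
  have "\<zeta> ^ (a * b) = \<zeta>"
    using b z_mod[of "a*b"] z_mod[of 1] p2 unfolding cong_def by simp
  have "(1 - \<zeta>) * (sum ((^) \<zeta>) {..<a} * R) = (1 - \<zeta> ^ a) * R"
    by (simp add: one_diff_power_eq)
  also have "\<dots> = 1 - (\<zeta> ^ a) ^ b" unfolding R_def by (simp add: one_diff_power_eq)
  also have "\<dots> = 1 - \<zeta>" using \<open>\<zeta> ^ (a * b) = \<zeta>\<close> by (simp add: power_mult)
  finally have "sum ((^) \<zeta>) {..<a} * R = 1" using z_ne1 by simp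
  moreover have "R \<in> Zring \<zeta>" unfolding R_def by (intro Z_sum Z_power Z_zpow) auto
  ultimately show ?thesis by blast
qed

lemma unit_prod:
  assumes i: "i < p"
  shows "\<exists>u\<in>Zring \<zeta>. \<exists>v\<in>Zring \<zeta>. u * v = 1 \<and> (\<Prod>m<i. \<zeta> ^ i - \<zeta> ^ m) = (1 - \<zeta>) ^ i * u"
proof -
  define f where "f m = - (\<zeta> ^ m * sum ((^) \<zeta>) {..<i - m})" for m
  have fac: "\<zeta> ^ i - \<zeta> ^ m = (1 - \<zeta>) * f m" if "m < i" for m
  proof -
    have "\<zeta> ^ i = \<zeta> ^ m * \<zeta> ^ (i - m)" using that by (simp flip: power_add)
    then have "\<zeta> ^ i - \<zeta> ^ m = - (\<zeta> ^ m * (1 - \<zeta> ^ (i - m)))" by (simp add: algebra_simps)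
    then show ?thesis by (simp add: f_def one_diff_power_eq algebra_simps)
  qed
  have "\<exists>v\<in>Zring \<zeta>. f m * v = 1" if "m < i" for m
  proof -
    have "1 \<le> i - m" "i - m < p" using that i by auto
    then obtain r where r: "r \<in> Zring \<zeta>" "sum ((^) \<zeta>) {..<i - m} * r = 1"
      using S_unit[of "i - m"] by blast
    have "\<zeta> ^ m * \<zeta> ^ (p - m) = 1" using that i zp by (simp flip: power_add)
    then have "f m * (- (\<zeta> ^ (p - m) * r)) = 1"
      using r(2) unfolding f_def by (simp add: algebra_simps)
      (metis mult.assoc mult.commute mult_1)
    moreover have "- (\<zeta> ^ (p - m) * r) \<in> Zring \<zeta>" using r by (intro Z_uminus Z_mult Z_zpow)
    ultimately show ?thesis by blast
  qed
  then obtain V where V: "\<And>m. m < i \<Longrightarrow> V m \<in> Zring \<zeta> \<and> f m * V m = 1" by metis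
  have "(\<Prod>m<i. \<zeta> ^ i - \<zeta> ^ m) = (\<Prod>m<i. (1 - \<zeta>) * f m)" using fac by (intro prod.cong) auto
  also have "\<dots> = (1 - \<zeta>) ^ i * prod f {..<i}" by (simp add: prod.distrib)
  finally have e: "(\<Prod>m<i. \<zeta> ^ i - \<zeta> ^ m) = (1 - \<zeta>) ^ i * prod f {..<i}" .
  have "prod f {..<i} * prod V {..<i} = 1"
    using V by (simp flip: prod.distrib)
  moreover have "prod f {..<i} \<in> Zring \<zeta>"
    unfolding f_def by (intro Z_prod Z_uminus Z_mult Z_zpow Z_sum) auto
  moreover have "prod V {..<i} \<in> Zring \<zeta>" using V by (intro Z_prod) auto
  ultimately show ?thesis using e by blast
qed

lemma g_exists: "\<exists>g\<in>grpring p \<zeta>. \<forall>j<p. omega p \<zeta> g j = (\<Prod>m<i. \<zeta> ^ j - \<zeta> ^ m)"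
proof (induction i)
  case 0
  show ?case using p2 by (intro bexI[of _ grp_one]) (auto simp: omega_one prod_one_def grp_one_in)
next
  case (Suc i)
  then obtain g where g: "g \<in> grpring p \<zeta>" "\<forall>j<p. omega p \<zeta> g j = (\<Prod>m<i. \<zeta> ^ j - \<zeta> ^ m)" by blast
  define c where "c = (\<lambda>k::nat. if k = 1 then (1::complex) else 0)"
  have c: "c \<in> grpring p \<zeta>" using p2 by (auto simp: c_def grpring_def intro: Z_one Z_zero)
  have oc: "omega p \<zeta> c j = \<zeta> ^ j" if "j < p" for j
    using that p2 by (simp add: omega_def c_def if_mult0 sum.delta)
  define h where "h = grp_add c (\<lambda>k. (- (\<zeta> ^ i)) * grp_one k)"
  have h: "h \<in> grpring p \<zeta>" unfolding h_def using p2
    by (intro grp_add_in c grp_scal_in grp_one_in Z_uminus Z_zpow) auto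
  have os: "omega p \<zeta> (\<lambda>k. (- (\<zeta> ^ i)) * grp_one k) = (\<lambda>j. (- (\<zeta> ^ i)) * omega p \<zeta> grp_one j)"
    by (rule omega_scal)
  have oh: "omega p \<zeta> h j = \<zeta> ^ j - \<zeta> ^ i" if "j < p" for j
    using that p2 unfolding h_def omega_add os by (simp add: omega_one oc prod_one_def)
  show ?case
    using g h p2
    by (intro bexI[of _ "grp_mult p g h"]) (auto simp: omega_mult oh intro: grp_mult_in)
qed

lemma W1_diff:
  assumes "y \<in> W1 p \<zeta>" "h \<in> W1 p \<zeta>"
  shows "(\<lambda>j. y j - h j) \<in> W1 p \<zeta>"
proof -
  have "(\<Sum>j\<le>i. (-1) ^ j * of_nat (i choose j) * (y j - h j)) =
        (\<Sum>j\<le>i. (-1) ^ j * of_nat (i choose j) * y j) - (\<Sum>j\<le>i. (-1) ^ j * of_nat (i choose j) * h j)"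
    for i by (simp add: right_diff_distrib sum_subtractf)
  then show ?thesis using assms
    by (auto simp: W1_def prodring_def intro: Z_diff cong0_diff)
qed

lemma surj_aux:
  "n \<le> p \<Longrightarrow> y \<in> W1 p \<zeta> \<Longrightarrow> (\<forall>j<p-n. y j = 0) \<Longrightarrow> y \<in> omega p \<zeta> ` grpring p \<zeta>"
proof (induction n arbitrary: y)
  case 0
  have "y = omega p \<zeta> (\<lambda>_. 0)"
    using 0 by (auto simp: omega_def fun_eq_iff W1_def prodring_def)
  moreover have "(\<lambda>_. 0) \<in> grpring p \<zeta>" by (auto simp: grpring_def intro: Z_zero)
  ultimately show ?case by blast
next
  case (Suc n)
  define i where "i = p - Suc n"
  have ip: "i < p" and pn: "p - n = Suc i" using Suc.prems(1) p2 by (auto simp: i_def)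
  have yW: "y \<in> prodring p \<zeta>" using Suc.prems(2) by (simp add: W1_def)
  have "cong0_ideal \<zeta> ((1 - \<zeta>) ^ i) (\<Sum>j\<le>i. (-1) ^ j * of_nat (i choose j) * y j)"
    using Suc.prems(2) ip by (simp add: W1_def)
  moreover have "(\<Sum>j\<le>i. (-1) ^ j * of_nat (i choose j) * y j) = (-1) ^ i * y i"
    using Suc.prems(3) by (simp add: lessThan_Suc_atMost[symmetric] i_def)
  ultimately obtain w where w: "w \<in> Zring \<zeta>" "(-1) ^ i * y i = (1 - \<zeta>) ^ i * w"
    unfolding cong0_ideal_def by auto
  define w' where "w' = (-1) ^ i * w"
  have w': "w' \<in> Zring \<zeta>" "y i = (1 - \<zeta>) ^ i * w'"
    using w unfolding w'_def by (auto intro: Z_mult Z_m1pow) (metis minus_one_mult_self mult.assoc mult_1 mult.left_commute)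
  obtain g where g: "g \<in> grpring p \<zeta>" "\<forall>j<p. omega p \<zeta> g j = (\<Prod>m<i. \<zeta> ^ j - \<zeta> ^ m)"
    using g_exists by blast
  obtain u v where uv: "u \<in> Zring \<zeta>" "v \<in> Zring \<zeta>" "u * v = 1" "(\<Prod>m<i. \<zeta> ^ i - \<zeta> ^ m) = (1 - \<zeta>) ^ i * u"
    using unit_prod[OF ip] by blast
  define h where "h = (\<lambda>k. (v * w') * g k)"
  have h: "h \<in> grpring p \<zeta>" unfolding h_def using g w' uv by (intro grp_scal_in Z_mult) auto
  have oh: "omega p \<zeta> h = (\<lambda>j. (v * w') * omega p \<zeta> g j)" unfolding h_def by (rule omega_scal)
  define y' where "y' = (\<lambda>j. y j - omega p \<zeta> h j)"
  have y'W: "y' \<in> W1 p \<zeta>" unfolding y'_def using Suc.prems(2) omega_W1[OF h] by (rule W1_diff)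
  have "y' j = 0" if j: "j < p - n" for j
  proof (cases "j < i")
    case True
    then have "y j = 0" using Suc.prems(3) by (simp add: i_def)
    moreover have "(\<Prod>m<i. \<zeta> ^ j - \<zeta> ^ m) = 0" using True by (intro prod_zero) auto
    ultimately show ?thesis using g ip True by (simp add: y'_def oh)
  next
    case False
    then have "j = i" using j pn by simp
    then show ?thesis using g ip uv w' by (simp add: y'_def oh algebra_simps)
  qed
  then have "y' \<in> omega p \<zeta> ` grpring p \<zeta>" using Suc.IH[OF _ y'W] Suc.prems(1) by simp
  then obtain x' where x': "x' \<in> grpring p \<zeta>" "y' = omega p \<zeta> x'" by blast
  have "\<forall>j. y j = y' j + omega p \<zeta> h j" by (simp add: y'_def)
  then have "y = omega p \<zeta> (grp_add x' h)"
    using x' by (simp add: omega_add fun_eq_iff)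
  then show ?case using x' h grp_add_in by blast
qed

lemma omega_bij: "bij_betw (omega p \<zeta>) (grpring p \<zeta>) (W1 p \<zeta>)"
proof -
  have "W1 p \<zeta> \<subseteq> omega p \<zeta> ` grpring p \<zeta>"
    using surj_aux[of p] by auto
  moreover have "omega p \<zeta> ` grpring p \<zeta> \<subseteq> W1 p \<zeta>" using omega_W1 by auto
  ultimately show ?thesis using omega_inj by (auto simp: bij_betw_def)
qed

end

theorem proposition3p19:
  fixes p :: nat and \<zeta> :: complex
  assumes "prime p"
    and "\<zeta> ^ p = 1" and "\<forall>k\<in>{1..<p}. \<zeta> ^ k \<noteq> 1"
  shows "(\<forall>x\<in>grpring p \<zeta>. omega p \<zeta> x \<in> prodring p \<zeta>)
    \<and> (\<forall>x\<in>grpring p \<zeta>. \<forall>y\<in>grpring p \<zeta>.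
          omega p \<zeta> (grp_add x y) = (\<lambda>j. omega p \<zeta> x j + omega p \<zeta> y j))
    \<and> (\<forall>x\<in>grpring p \<zeta>. \<forall>y\<in>grpring p \<zeta>.
          omega p \<zeta> (grp_mult p x y) = (\<lambda>j. omega p \<zeta> x j * omega p \<zeta> y j))
    \<and> omega p \<zeta> grp_one = prod_one p
    \<and> bij_betw (omega p \<zeta>) (grpring p \<zeta>) (W1 p \<zeta>)"
  using omega_in omega_add omega_mult[OF assms] omega_one omega_bij[OF assms]
    p2[OF assms] by auto

end
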